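(* For each $k\ge1$ there is a cone complex $\mathcal{S}_k$ in $M_{\mathbb{R}}$ whose support $\bigcup_{\sigma\in\mathcal{S}_k}\sigma$ equals \[\mathcal{W}_k=\{\theta\in M_{\mathbb{R}}:\text{there exists a nonzero }\theta\text{-semistable object }E\in\mathcal{A}\text{ of total dimension}\le k\}.\] In particular $\mathcal{W}_k$ is closed.
   Context: $Q$ is a quiver (finite vertex set $V(Q)$, finite arrow set), $\mathbb{C}Q$ its path algebra, $I\subset\mathbb{C}Q$ a two-sided ideal spanned by linear combinations of paths of length $\ge2$, and $\mathcal{A}=\mathrm{rep}(Q,I)$ the abelian category of finite-dimensional left $\mathbb{C}Q/I$-modules. $N=\mathbb{Z}^{V(Q)}$ with basis $(e_i)$; each $E\in\mathcal{A}$ has a dimension vector $d(E)\in N$; $M=\mathrm{Hom}(N,\mathbb{Z})$, $M_{\mathbb{R}}=M\otimes\mathbb{R}$, and for $\theta\in M_{\mathbb{R}}$ write $\theta(E)=\theta(d(E))$. The total dimension of $E$ is $\dim_{\mathbb{C}}E$. An object $E$ is $\theta$-semistable if $\theta(E)=0$ and every subobject $A\subset E$ satisfies $\theta(A)\le0$. A cone is a convex rational polyhedral cone $\{\sum\lambda_im_i:\lambda_i\ge0\}$ ($m_i\in M$); a face of $\sigma$ is $\sigma\cap n^\perp$ for $n\in N$ with $\theta(n)\ge0$ on $\sigma$; a cone complex is a finite collection of cones closed under taking faces and such that any two intersect in a face of each. *)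

theory Defs
  imports "Jordan_Normal_Form.Matrix" "HOL-Analysis.Function_Topology"
begin

text \<open>A path is a pair (start vertex, list of arrows),
arrows listed in the order in which they are traversed; the trivial path at i is (i, []).\<close>

definition vpath :: "'a set \<Rightarrow> ('a \<Rightarrow> 'v) \<Rightarrow> ('a \<Rightarrow> 'v) \<Rightarrow> 'v \<times> 'a list \<Rightarrow> bool" where
  "vpath Arr src tgt p \<longleftrightarrow> set (snd p) \<subseteq> Arr \<and>
     (snd p \<noteq> [] \<longrightarrow> src (hd (snd p)) = fst p \<and>
        (\<forall>k. Suc k < length (snd p) \<longrightarrow> tgt (snd p ! k) = src (snd p ! Suc k)))"

definition pend :: "('a \<Rightarrow> 'v) \<Rightarrow> 'v \<times> 'a list \<Rightarrow> 'v" where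
  "pend tgt p = (if snd p = [] then fst p else tgt (last (snd p)))"

text \<open>Concatenation: first p, then q (None = product is zero in the path algebra).\<close>
definition pcomp :: "('a \<Rightarrow> 'v) \<Rightarrow> 'v \<times> 'a list \<Rightarrow> 'v \<times> 'a list \<Rightarrow> ('v \<times> 'a list) option" where
  "pcomp tgt p q = (if pend tgt p = fst q then Some (fst p, snd p @ snd q) else None)"

text \<open>Elements of the path algebra CQ: finitely supported C-linear combinations of paths.\<close>
definition path_alg :: "'a set \<Rightarrow> ('a \<Rightarrow> 'v) \<Rightarrow> ('a \<Rightarrow> 'v) \<Rightarrow> ('v \<times> 'a list \<Rightarrow> complex) set" where
  "path_alg Arr src tgt = {x. finite {p. x p \<noteq> 0} \<and> (\<forall>p. x p \<noteq> 0 \<longrightarrow> vpath Arr src tgt p)}"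

definition rmul :: "('a \<Rightarrow> 'v) \<Rightarrow> ('v \<times> 'a list \<Rightarrow> complex) \<Rightarrow> 'v \<times> 'a list \<Rightarrow> ('v \<times> 'a list \<Rightarrow> complex)" where
  "rmul tgt x q = (\<lambda>w. \<Sum>u\<in>{u. x u \<noteq> 0}. if pcomp tgt u q = Some w then x u else 0)"

definition lmul :: "('a \<Rightarrow> 'v) \<Rightarrow> 'v \<times> 'a list \<Rightarrow> ('v \<times> 'a list \<Rightarrow> complex) \<Rightarrow> ('v \<times> 'a list \<Rightarrow> complex)" where
  "lmul tgt q x = (\<lambda>w. \<Sum>u\<in>{u. x u \<noteq> 0}. if pcomp tgt q u = Some w then x u else 0)"

text \<open>I is a two-sided ideal of CQ (closure under multiplication by basis paths on both
sides together with linearity gives closure under multiplication by all of CQ),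
spanned by linear combinations of paths of length at least 2.\<close>
definition admissible_ideal :: "'a set \<Rightarrow> ('a \<Rightarrow> 'v) \<Rightarrow> ('a \<Rightarrow> 'v) \<Rightarrow> ('v \<times> 'a list \<Rightarrow> complex) set \<Rightarrow> bool" where
  "admissible_ideal Arr src tgt I \<longleftrightarrow>
     I \<subseteq> path_alg Arr src tgt \<and> (\<lambda>_. 0) \<in> I \<and>
     (\<forall>x\<in>I. \<forall>y\<in>I. (\<lambda>p. x p + y p) \<in> I) \<and>
     (\<forall>x\<in>I. \<forall>c. (\<lambda>p. c * x p) \<in> I) \<and>
     (\<forall>x\<in>I. \<forall>q. vpath Arr src tgt q \<longrightarrow> rmul tgt x q \<in> I \<and> lmul tgt q x \<in> I) \<and>
     (\<forall>x\<in>I. \<forall>p. x p \<noteq> 0 \<longrightarrow> 2 \<le> length (snd p))"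

record ('v, 'a) qrep =
  dv :: "'v \<Rightarrow> nat"
  mp :: "'a \<Rightarrow> complex mat"

definition is_rep :: "'a set \<Rightarrow> ('a \<Rightarrow> 'v) \<Rightarrow> ('a \<Rightarrow> 'v) \<Rightarrow> ('v, 'a) qrep \<Rightarrow> bool" where
  "is_rep Arr src tgt E \<longleftrightarrow> (\<forall>a\<in>Arr. mp E a \<in> carrier_mat (dv E (tgt a)) (dv E (src a)))"

text \<open>The linear map of a path (first arrow applied first).\<close>
definition peval :: "('v, 'a) qrep \<Rightarrow> 'v \<times> 'a list \<Rightarrow> complex mat" where
  "peval E p = foldl (\<lambda>M a. mp E a * M) (1\<^sub>m (dv E (fst p))) (snd p)"

text \<open>Every element of I acts as zero; written blockwise (component e_j x e_i), entrywise.\<close>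
definition satisfies :: "'a set \<Rightarrow> ('a \<Rightarrow> 'v) \<Rightarrow> ('a \<Rightarrow> 'v) \<Rightarrow> ('v \<times> 'a list \<Rightarrow> complex) set
     \<Rightarrow> ('v, 'a) qrep \<Rightarrow> bool" where
  "satisfies Arr src tgt I E \<longleftrightarrow>
     (\<forall>x\<in>I. \<forall>i j. \<forall>r c. r < dv E j \<longrightarrow> c < dv E i \<longrightarrow>
        (\<Sum>p\<in>{p. x p \<noteq> 0 \<and> fst p = i \<and> pend tgt p = j}. x p * peval E p $$ (r, c)) = 0)"

definition objA :: "'a set \<Rightarrow> ('a \<Rightarrow> 'v) \<Rightarrow> ('a \<Rightarrow> 'v) \<Rightarrow> ('v \<times> 'a list \<Rightarrow> complex) set
     \<Rightarrow> ('v, 'a) qrep \<Rightarrow> bool" where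
  "objA Arr src tgt I E \<longleftrightarrow> is_rep Arr src tgt E \<and> satisfies Arr src tgt I E"

definition is_mor :: "'a set \<Rightarrow> ('a \<Rightarrow> 'v) \<Rightarrow> ('a \<Rightarrow> 'v) \<Rightarrow> ('v, 'a) qrep \<Rightarrow> ('v, 'a) qrep
     \<Rightarrow> ('v \<Rightarrow> complex mat) \<Rightarrow> bool" where
  "is_mor Arr src tgt A E f \<longleftrightarrow>
     (\<forall>i. f i \<in> carrier_mat (dv E i) (dv A i)) \<and>
     (\<forall>a\<in>Arr. f (tgt a) * mp A a = mp E a * f (src a))"

definition injective_mor :: "('v, 'a) qrep \<Rightarrow> ('v, 'a) qrep \<Rightarrow> ('v \<Rightarrow> complex mat) \<Rightarrow> bool" where
  "injective_mor A E f \<longleftrightarrow>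
     (\<forall>i. \<forall>v\<in>carrier_vec (dv A i). f i *\<^sub>v v = 0\<^sub>v (dv E i) \<longrightarrow> v = 0\<^sub>v (dv A i))"

definition subobj :: "'a set \<Rightarrow> ('a \<Rightarrow> 'v) \<Rightarrow> ('a \<Rightarrow> 'v) \<Rightarrow> ('v \<times> 'a list \<Rightarrow> complex) set
     \<Rightarrow> ('v, 'a) qrep \<Rightarrow> ('v, 'a) qrep \<Rightarrow> bool" where
  "subobj Arr src tgt I A E \<longleftrightarrow> objA Arr src tgt I A \<and>
     (\<exists>f. is_mor Arr src tgt A E f \<and> injective_mor A E f)"

text \<open>M_R = real-valued functions on vertices; theta(n) for n in N.\<close>
definition pair :: "('v::finite \<Rightarrow> real) \<Rightarrow> ('v \<Rightarrow> real) \<Rightarrow> real" where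
  "pair \<theta> n = (\<Sum>i\<in>UNIV. \<theta> i * n i)"

definition total_dim :: "('v::finite, 'a) qrep \<Rightarrow> nat" where
  "total_dim E = (\<Sum>i\<in>UNIV. dv E i)"

definition semistable :: "'a set \<Rightarrow> ('a \<Rightarrow> 'v::finite) \<Rightarrow> ('a \<Rightarrow> 'v) \<Rightarrow> ('v \<times> 'a list \<Rightarrow> complex) set
     \<Rightarrow> ('v \<Rightarrow> real) \<Rightarrow> ('v, 'a) qrep \<Rightarrow> bool" where
  "semistable Arr src tgt I \<theta> E \<longleftrightarrow>
     pair \<theta> (\<lambda>i. real (dv E i)) = 0 \<and>
     (\<forall>A. subobj Arr src tgt I A E \<longrightarrow> pair \<theta> (\<lambda>i. real (dv A i)) \<le> 0)"

definition wall_set :: "'a set \<Rightarrow> ('a \<Rightarrow> 'v::finite) \<Rightarrow> ('a \<Rightarrow> 'v) \<Rightarrow> ('v \<times> 'a list \<Rightarrow> complex) set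
     \<Rightarrow> nat \<Rightarrow> ('v \<Rightarrow> real) set" where
  "wall_set Arr src tgt I k = {\<theta>. \<exists>E::('v,'a) qrep. objA Arr src tgt I E \<and> total_dim E \<noteq> 0 \<and>
       total_dim E \<le> k \<and> semistable Arr src tgt I \<theta> E}"

definition rat_cone :: "('v::finite \<Rightarrow> real) set \<Rightarrow> bool" where
  "rat_cone \<sigma> \<longleftrightarrow> (\<exists>G. finite G \<and> (\<forall>g\<in>G. \<forall>i. g i \<in> \<int>) \<and>
      \<sigma> = {(\<lambda>i. \<Sum>g\<in>G. c g * g i) | c. \<forall>g\<in>G. 0 \<le> c g})"

definition is_face :: "('v::finite \<Rightarrow> real) set \<Rightarrow> ('v \<Rightarrow> real) set \<Rightarrow> bool" where
  "is_face \<tau> \<sigma> \<longleftrightarrow> (\<exists>n::'v \<Rightarrow> int. (\<forall>\<theta>\<in>\<sigma>. 0 \<le> pair \<theta> (\<lambda>i. real_of_int (n i))) \<and>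
      \<tau> = \<sigma> \<inter> {\<theta>. pair \<theta> (\<lambda>i. real_of_int (n i)) = 0})"

definition cone_complex :: "('v::finite \<Rightarrow> real) set set \<Rightarrow> bool" where
  "cone_complex S \<longleftrightarrow> finite S \<and> (\<forall>\<sigma>\<in>S. rat_cone \<sigma>) \<and>
     (\<forall>\<sigma>\<in>S. \<forall>\<tau>. is_face \<tau> \<sigma> \<longrightarrow> \<tau> \<in> S) \<and>
     (\<forall>\<sigma>\<in>S. \<forall>\<tau>\<in>S. is_face (\<sigma> \<inter> \<tau>) \<sigma> \<and> is_face (\<sigma> \<inter> \<tau>) \<tau>)"

end

theory Submission
  imports Defs "Jordan_Normal_Form.Determinant"
begin

abbreviation ip :: "('v::finite \<Rightarrow> real) \<Rightarrow> ('v \<Rightarrow> int) \<Rightarrow> real" where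
  "ip \<theta> n \<equiv> pair \<theta> (\<lambda>i. real_of_int (n i))"

lemma pair_add: "pair (\<lambda>i. x i + y i) n = pair x n + pair y n"
  unfolding pair_def by (simp add: algebra_simps sum.distrib)
lemma pair_scale: "pair (\<lambda>i. a * x i) n = a * pair x n"
  unfolding pair_def by (simp add: sum_distrib_left algebra_simps)
lemma pair_zero[simp]: "pair (\<lambda>i. 0) n = 0"
  unfolding pair_def by simp
lemma pair_sum: "pair (\<lambda>i. \<Sum>a\<in>A. f a i) n = (\<Sum>a\<in>A. pair (f a) n)"
  unfolding pair_def by (simp add: sum_distrib_right sum.swap[of _ A])
lemma pair_add2: "pair x (\<lambda>i. n i + m i) = pair x n + pair x m"
  unfolding pair_def by (simp add: algebra_simps sum.distrib)
lemma pair_scale2: "pair x (\<lambda>i. a * n i) = a * pair x n"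
  unfolding pair_def by (simp add: sum_distrib_left algebra_simps)
lemma pair_sum2: "pair x (\<lambda>i. \<Sum>a\<in>A. f a i) = (\<Sum>a\<in>A. pair x (f a))"
  unfolding pair_def by (simp add: sum_distrib_left sum.swap[of _ A])

lemma ip_add2: "ip x (\<lambda>i. n i + m i) = ip x n + ip x m"
  using pair_add2[of x "\<lambda>i. real_of_int (n i)" "\<lambda>i. real_of_int (m i)"] by simp
lemma ip_scale2: "ip x (\<lambda>i. a * n i) = of_int a * ip x n"
  using pair_scale2[of x "of_int a" "\<lambda>i. real_of_int (n i)"] by simp
lemma ip_neg2: "ip x (\<lambda>i. - n i) = - ip x n"
  using ip_scale2[of x "-1" n] by simp
lemma ip_sum2: "ip x (\<lambda>i. \<Sum>a\<in>A. f a i) = (\<Sum>a\<in>A. ip x (f a))"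
  using pair_sum2[of x "\<lambda>a i. real_of_int (f a i)" A] by simp

definition ccone :: "('v \<Rightarrow> real) set \<Rightarrow> bool" where
  "ccone C \<longleftrightarrow> (\<lambda>i. 0) \<in> C \<and> (\<forall>x\<in>C. \<forall>y\<in>C. (\<lambda>i. x i + y i) \<in> C) \<and>
     (\<forall>x\<in>C. \<forall>a::real. 0 \<le> a \<longrightarrow> (\<lambda>i. a * x i) \<in> C)"

lemma ccone_sum:
  assumes "ccone C" "finite A" "\<forall>a\<in>A. f a \<in> C"
  shows "(\<lambda>i. \<Sum>a\<in>A. f a i) \<in> C"
  using assms(2,3)
proof (induction A rule: finite_induct)
  case empty then show ?case using assms(1) unfolding ccone_def by simp
next
  case (insert x F)
  then show ?case using assms(1) unfolding ccone_def by simp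
qed

lemma ccone_Int: "ccone A \<Longrightarrow> ccone B \<Longrightarrow> ccone (A \<inter> B)"
  unfolding ccone_def by blast

lemma ccone_half: "ccone {\<theta>. 0 \<le> pair \<theta> n}"
  unfolding ccone_def by (simp add: pair_add pair_scale)
lemma ccone_hyp: "ccone {\<theta>. pair \<theta> n = 0}"
  unfolding ccone_def by (simp add: pair_add pair_scale)

definition cone_gen :: "('v \<Rightarrow> real) set \<Rightarrow> ('v \<Rightarrow> real) set" where
  "cone_gen G = {(\<lambda>i. \<Sum>g\<in>G. c g * g i) | c. \<forall>g\<in>G. 0 \<le> c g}"

lemma ccone_cone_gen: "ccone (cone_gen G)"
  unfolding ccone_def cone_gen_def
proof (intro conjI ballI allI impI)
  show "(\<lambda>i. 0) \<in> {\<lambda>i. \<Sum>g\<in>G. c g * g i |c. \<forall>g\<in>G. 0 \<le> c g}"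
    by (rule CollectI, rule exI[of _ "\<lambda>_. 0"]) simp
next
  fix x y assume x: "x \<in> {\<lambda>i. \<Sum>g\<in>G. c g * g i |c. \<forall>g\<in>G. 0 \<le> c g}"
    and y: "y \<in> {\<lambda>i. \<Sum>g\<in>G. c g * g i |c. \<forall>g\<in>G. 0 \<le> c g}"
  then obtain c d where c: "x = (\<lambda>i. \<Sum>g\<in>G. c g * g i)" "\<forall>g\<in>G. 0 \<le> c g"
    and d: "y = (\<lambda>i. \<Sum>g\<in>G. d g * g i)" "\<forall>g\<in>G. 0 \<le> d g" by blast
  show "(\<lambda>i. x i + y i) \<in> {\<lambda>i. \<Sum>g\<in>G. c g * g i |c. \<forall>g\<in>G. 0 \<le> c g}"
    by (rule CollectI, rule exI[of _ "\<lambda>g. c g + d g"])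
       (use c d in \<open>auto simp: sum.distrib algebra_simps\<close>)
next
  fix x and a :: real assume x: "x \<in> {\<lambda>i. \<Sum>g\<in>G. c g * g i |c. \<forall>g\<in>G. 0 \<le> c g}" and a: "0 \<le> a"
  then obtain c where c: "x = (\<lambda>i. \<Sum>g\<in>G. c g * g i)" "\<forall>g\<in>G. 0 \<le> c g" by blast
  show "(\<lambda>i. a * x i) \<in> {\<lambda>i. \<Sum>g\<in>G. c g * g i |c. \<forall>g\<in>G. 0 \<le> c g}"
    by (rule CollectI, rule exI[of _ "\<lambda>g. a * c g"])
       (use c a in \<open>auto simp: sum_distrib_left algebra_simps\<close>)
qed

lemma gen_in_cone_gen: assumes "finite G" "g \<in> G" shows "g \<in> cone_gen G"
proof -
  have "(\<lambda>i. \<Sum>h\<in>G. (if h = g then 1 else 0) * h i) = g"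
  proof
    fix i
    have "(\<Sum>h\<in>G. (if h = g then 1 else 0) * h i) = (\<Sum>h\<in>G. if h = g then g i else 0)"
      by (rule sum.cong) auto
    also have "\<dots> = g i" using assms by simp
    finally show "(\<Sum>h\<in>G. (if h = g then 1 else 0) * h i) = g i" .
  qed
  thus ?thesis unfolding cone_gen_def
    by (intro CollectI exI[of _ "\<lambda>h. if h = g then 1 else 0"]) auto
qed

lemma cone_gen_least:
  assumes "finite G" "G \<subseteq> C" "ccone C"
  shows "cone_gen G \<subseteq> C"
proof
  fix x assume "x \<in> cone_gen G"
  then obtain c where c: "x = (\<lambda>i. \<Sum>g\<in>G. c g * g i)" "\<forall>g\<in>G. 0 \<le> c g"
    unfolding cone_gen_def by blast
  have "\<forall>g\<in>G. (\<lambda>i. c g * g i) \<in> C" using assms c(2) unfolding ccone_def by blast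
  from ccone_sum[OF assms(3,1) this] show "x \<in> C" using c(1) by simp
qed

lemma cone_gen_mono: "finite G \<Longrightarrow> H \<subseteq> G \<Longrightarrow> cone_gen H \<subseteq> cone_gen G"
  by (rule cone_gen_least) (auto intro: finite_subset gen_in_cone_gen ccone_cone_gen)

lemma rat_cone_iff: "rat_cone \<sigma> \<longleftrightarrow> (\<exists>G. finite G \<and> (\<forall>g\<in>G. \<forall>i. g i \<in> \<int>) \<and> \<sigma> = cone_gen G)"
  by (simp add: rat_cone_def cone_gen_def)

lemma rat_coneE:
  assumes "rat_cone \<sigma>"
  obtains G where "finite G" "\<forall>g\<in>G. \<forall>i. g i \<in> \<int>" "\<sigma> = cone_gen G"
proof -
  from assms have "\<exists>G. finite G \<and> (\<forall>g\<in>G. \<forall>i. g i \<in> \<int>) \<and> \<sigma> = cone_gen G"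
    by (simp only: rat_cone_iff)
  then obtain G where "finite G \<and> (\<forall>g\<in>G. \<forall>i. g i \<in> \<int>) \<and> \<sigma> = cone_gen G" ..
  thus thesis using that by (elim conjE)
qed

lemma rat_coneI:
  assumes "finite G" "\<forall>g\<in>G. \<forall>i. g i \<in> \<int>" "\<sigma> = cone_gen G"
  shows "rat_cone \<sigma>"
  unfolding rat_cone_iff by (rule exI[of _ G]) (use assms in simp)

lemma ip_Ints: "(\<forall>i. g i \<in> \<int>) \<Longrightarrow> ip g m \<in> \<int>"
  unfolding pair_def by (intro Ints_sum Ints_mult) auto

lemma Ints_pos_ge1: assumes "(x::real) \<in> \<int>" "0 < x" shows "1 \<le> x"
proof -
  obtain z where z: "x = of_int z" using assms(1) Ints_cases by blast
  hence "0 < z" using assms(2) by simp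
  hence "1 \<le> z" by simp
  thus ?thesis using z by simp
qed

lemma ip_cone_gen:
  assumes "\<theta> = (\<lambda>i. \<Sum>g\<in>G. c g * g i)"
  shows "pair \<theta> n = (\<Sum>g\<in>G. c g * pair g n)"
  using assms by (simp add: pair_sum pair_scale)

lemma face_char:
  assumes fin: "finite G" and nn: "\<forall>\<theta>\<in>cone_gen G. 0 \<le> ip \<theta> m"
  shows "cone_gen G \<inter> {\<theta>. ip \<theta> m = 0} = cone_gen {g\<in>G. ip g m = 0}"
proof
  show "cone_gen G \<inter> {\<theta>. ip \<theta> m = 0} \<subseteq> cone_gen {g\<in>G. ip g m = 0}"
  proof
    fix \<theta> assume th: "\<theta> \<in> cone_gen G \<inter> {\<theta>. ip \<theta> m = 0}"
    then obtain c where c: "\<theta> = (\<lambda>i. \<Sum>g\<in>G. c g * g i)" "\<forall>g\<in>G. 0 \<le> c g"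
      unfolding cone_gen_def by blast
    have gnn: "\<forall>g\<in>G. 0 \<le> ip g m" using nn gen_in_cone_gen[OF fin] by blast
    have e1: "ip \<theta> m = (\<Sum>g\<in>G. c g * ip g m)" by (rule ip_cone_gen[OF c(1)])
    have e0: "ip \<theta> m = 0" using th by blast
    have sum0: "(\<Sum>g\<in>G. c g * ip g m) = 0" using e1 e0 by simp
    have tnn: "\<forall>g\<in>G. 0 \<le> c g * ip g m" using c(2) gnn by simp
    have z: "\<forall>g\<in>G. c g * ip g m = 0"
      using sum_nonneg_eq_0_iff[OF fin, of "\<lambda>g. c g * ip g m"] tnn sum0 by simp
    have z2: "\<And>g i. g \<in> G - {g\<in>G. ip g m = 0} \<Longrightarrow> c g * g i = 0"
    proof -
      fix g i assume g: "g \<in> G - {g\<in>G. ip g m = 0}"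
      hence g1: "g \<in> G" "ip g m \<noteq> 0" by auto
      hence "c g * ip g m = 0" using z by blast
      hence "c g = 0" using g1(2) by simp
      thus "c g * g i = 0" by simp
    qed
    have "\<theta> = (\<lambda>i. \<Sum>g\<in>{g\<in>G. ip g m = 0}. c g * g i)"
    proof
      fix i
      have "(\<Sum>g\<in>G. c g * g i) = (\<Sum>g\<in>{g\<in>G. ip g m = 0}. c g * g i)"
        apply (rule sum.mono_neutral_right[OF fin])
         apply blast
        apply (rule ballI)
        apply (rule z2)
        apply assumption
        done
      thus "\<theta> i = (\<Sum>g\<in>{g\<in>G. ip g m = 0}. c g * g i)" using c(1) by simp
    qed
    moreover have "\<forall>g\<in>{g\<in>G. ip g m = 0}. 0 \<le> c g" using c(2) by simp
    ultimately show "\<theta> \<in> cone_gen {g\<in>G. ip g m = 0}" unfolding cone_gen_def by blast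
  qed
next
  have cc: "ccone (cone_gen G \<inter> {\<theta>. ip \<theta> m = 0})"
    by (rule ccone_Int[OF ccone_cone_gen ccone_hyp])
  have sub: "{g\<in>G. ip g m = 0} \<subseteq> cone_gen G \<inter> {\<theta>. ip \<theta> m = 0}"
    using gen_in_cone_gen[OF fin] by blast
  show "cone_gen {g\<in>G. ip g m = 0} \<subseteq> cone_gen G \<inter> {\<theta>. ip \<theta> m = 0}"
    by (rule cone_gen_least[OF _ sub cc]) (simp add: fin)
qed

lemma face_refl: "is_face \<sigma> \<sigma>"
  unfolding is_face_def by (rule exI[of _ "\<lambda>_. 0"]) (simp add: pair_def)

lemma face_sub: "is_face \<tau> \<sigma> \<Longrightarrow> \<tau> \<subseteq> \<sigma>"
  unfolding is_face_def by blast

lemma face_Int: "is_face \<tau>1 \<sigma> \<Longrightarrow> is_face \<tau>2 \<sigma> \<Longrightarrow> is_face (\<tau>1 \<inter> \<tau>2) \<sigma>"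
  unfolding is_face_def
proof (elim exE conjE)
  fix n1 n2 assume a: "\<forall>\<theta>\<in>\<sigma>. 0 \<le> ip \<theta> n1" "\<tau>1 = \<sigma> \<inter> {\<theta>. ip \<theta> n1 = 0}"
    "\<forall>\<theta>\<in>\<sigma>. 0 \<le> ip \<theta> n2" "\<tau>2 = \<sigma> \<inter> {\<theta>. ip \<theta> n2 = 0}"
  show "\<exists>n. (\<forall>\<theta>\<in>\<sigma>. 0 \<le> ip \<theta> n) \<and> \<tau>1 \<inter> \<tau>2 = \<sigma> \<inter> {\<theta>. ip \<theta> n = 0}"
  proof (intro exI[of _ "\<lambda>i. n1 i + n2 i"] conjI)
    show "\<forall>\<theta>\<in>\<sigma>. 0 \<le> ip \<theta> (\<lambda>i. n1 i + n2 i)" using a by (simp add: pair_add2)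
    have "\<And>\<theta>. \<theta> \<in> \<sigma> \<Longrightarrow> ip \<theta> (\<lambda>i. n1 i + n2 i) = 0 \<longleftrightarrow> ip \<theta> n1 = 0 \<and> ip \<theta> n2 = 0"
    proof -
      fix \<theta> assume t: "\<theta> \<in> \<sigma>"
      have "ip \<theta> (\<lambda>i. n1 i + n2 i) = ip \<theta> n1 + ip \<theta> n2" by (simp add: pair_add2)
      moreover have "0 \<le> ip \<theta> n1" "0 \<le> ip \<theta> n2" using a t by auto
      ultimately show "ip \<theta> (\<lambda>i. n1 i + n2 i) = 0 \<longleftrightarrow> ip \<theta> n1 = 0 \<and> ip \<theta> n2 = 0" by linarith
    qed
    thus "\<tau>1 \<inter> \<tau>2 = \<sigma> \<inter> {\<theta>. ip \<theta> (\<lambda>i. n1 i + n2 i) = 0}"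
      using a by blast
  qed
qed

lemma face_mono: assumes "is_face F \<sigma>" "F \<subseteq> \<tau>" "\<tau> \<subseteq> \<sigma>" shows "is_face F \<tau>"
proof -
  obtain n where n: "\<forall>\<theta>\<in>\<sigma>. 0 \<le> ip \<theta> n" "F = \<sigma> \<inter> {\<theta>. ip \<theta> n = 0}"
    using assms(1) unfolding is_face_def by blast
  have "\<forall>\<theta>\<in>\<tau>. 0 \<le> ip \<theta> n" using n(1) assms(3) by blast
  moreover have "F = \<tau> \<inter> {\<theta>. ip \<theta> n = 0}" using n(2) assms(2,3) by blast
  ultimately show ?thesis unfolding is_face_def by blast
qed

lemma face_rat: assumes "rat_cone \<sigma>" "is_face \<tau> \<sigma>" shows "rat_cone \<tau>"
proof -
  obtain G where G: "finite G" "\<forall>g\<in>G. \<forall>i. g i \<in> \<int>" "\<sigma> = cone_gen G"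
    using assms(1) by (rule rat_coneE)
  obtain m where m: "\<forall>\<theta>\<in>\<sigma>. 0 \<le> ip \<theta> m" "\<tau> = \<sigma> \<inter> {\<theta>. ip \<theta> m = 0}"
    using assms(2) unfolding is_face_def by blast
  have nn: "\<forall>\<theta>\<in>cone_gen G. 0 \<le> ip \<theta> m" using m(1) G(3) by simp
  have "\<tau> = cone_gen G \<inter> {\<theta>. ip \<theta> m = 0}" using m(2) G(3) by simp
  also have "\<dots> = cone_gen {g\<in>G. ip g m = 0}" by (rule face_char[OF G(1) nn])
  finally have t: "\<tau> = cone_gen {g\<in>G. ip g m = 0}" .
  have f: "finite {g\<in>G. ip g m = 0}" using G(1) by simp
  have i: "\<forall>g\<in>{g\<in>G. ip g m = 0}. \<forall>i. g i \<in> \<int>" using G(2) by blast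
  show ?thesis by (rule rat_coneI[OF f i t])
qed

lemma finite_faces: assumes "rat_cone \<sigma>" shows "finite {\<tau>. is_face \<tau> \<sigma>}"
proof -
  obtain G where G: "finite G" "\<forall>g\<in>G. \<forall>i. g i \<in> \<int>" "\<sigma> = cone_gen G"
    using assms(1) by (rule rat_coneE)
  have "{\<tau>. is_face \<tau> \<sigma>} \<subseteq> cone_gen ` Pow G"
  proof
    fix \<tau> assume "\<tau> \<in> {\<tau>. is_face \<tau> \<sigma>}"
    then obtain m where m: "\<forall>\<theta>\<in>\<sigma>. 0 \<le> ip \<theta> m" "\<tau> = \<sigma> \<inter> {\<theta>. ip \<theta> m = 0}"
      unfolding is_face_def by blast
    have nn: "\<forall>\<theta>\<in>cone_gen G. 0 \<le> ip \<theta> m" using m(1) G(3) by simp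
    have "\<tau> = cone_gen G \<inter> {\<theta>. ip \<theta> m = 0}" using m(2) G(3) by simp
    also have "\<dots> = cone_gen {g\<in>G. ip g m = 0}" by (rule face_char[OF G(1) nn])
    finally have t: "\<tau> = cone_gen {g\<in>G. ip g m = 0}" .
    have "{g\<in>G. ip g m = 0} \<in> Pow G" by blast
    thus "\<tau> \<in> cone_gen ` Pow G" using t by blast
  qed
  thus ?thesis using G(1) finite_subset by blast
qed

lemma face_trans:
  assumes r: "rat_cone \<sigma>" and f1: "is_face \<tau> \<sigma>" and f2: "is_face \<rho> \<tau>"
  shows "is_face \<rho> \<sigma>"
proof -
  obtain G where G: "finite G" "\<forall>g\<in>G. \<forall>i. g i \<in> \<int>" "\<sigma> = cone_gen G"
    using r by (rule rat_coneE)
  obtain m where m: "\<forall>\<theta>\<in>\<sigma>. 0 \<le> ip \<theta> m" "\<tau> = \<sigma> \<inter> {\<theta>. ip \<theta> m = 0}"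
    using f1 unfolding is_face_def by blast
  obtain m' where m': "\<forall>\<theta>\<in>\<tau>. 0 \<le> ip \<theta> m'" "\<rho> = \<tau> \<inter> {\<theta>. ip \<theta> m' = 0}"
    using f2 unfolding is_face_def by blast
  define G0 where "G0 = {g\<in>G. ip g m = 0}"
  have fG0: "finite G0" using G(1) unfolding G0_def by simp
  have tau: "\<tau> = cone_gen G0" using face_char[OF G(1)] m G(3) unfolding G0_def by simp
  have rho: "\<rho> = cone_gen {g\<in>G0. ip g m' = 0}"
    using face_char[OF fG0] m' tau by simp
  define M where "M = (\<Sum>g\<in>G. \<bar>ip g m'\<bar>)"
  define L where "L = \<lceil>M\<rceil> + 1"
  define m'' where "m'' = (\<lambda>i. m' i + L * m i)"
  have ipm'': "\<And>\<theta>. ip \<theta> m'' = ip \<theta> m' + of_int L * ip \<theta> m"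
    unfolding m''_def by (simp add: pair_add2 pair_scale2)
  have M0: "0 \<le> M" unfolding M_def by (simp add: sum_nonneg)
  have L1: "M + 1 \<le> of_int L" unfolding L_def by linarith
  have gin: "\<And>g. g \<in> G \<Longrightarrow> g \<in> \<sigma>" using G gen_in_cone_gen by blast
  have A: "\<And>g. g \<in> G \<Longrightarrow> ip g m = 0 \<Longrightarrow> ip g m'' = ip g m'" using ipm'' by simp
  have A2: "\<And>g. g \<in> G \<Longrightarrow> ip g m = 0 \<Longrightarrow> 0 \<le> ip g m'"
  proof -
    fix g assume "g \<in> G" "ip g m = 0"
    hence "g \<in> \<tau>" using tau G0_def gen_in_cone_gen[OF fG0] by blast
    thus "0 \<le> ip g m'" using m' by blast
  qed
  have B: "\<And>g. g \<in> G \<Longrightarrow> ip g m \<noteq> 0 \<Longrightarrow> 0 < ip g m''"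
  proof -
    fix g assume g: "g \<in> G" "ip g m \<noteq> 0"
    have "0 \<le> ip g m" using m gin g by blast
    hence "0 < ip g m" using g by simp
    hence g1: "1 \<le> ip g m" using ip_Ints[of g m] G(2) g Ints_pos_ge1 by blast
    have "\<bar>ip g m'\<bar> \<le> M" unfolding M_def
      by (rule member_le_sum[OF g(1)]) (auto simp: G(1))
    moreover have "of_int L * 1 \<le> of_int L * ip g m"
      by (rule mult_left_mono) (use g1 L1 M0 in auto)
    ultimately show "0 < ip g m''" using ipm''[of g] L1 by linarith
  qed
  have nn: "\<forall>\<theta>\<in>\<sigma>. 0 \<le> ip \<theta> m''"
  proof -
    have "cone_gen G \<subseteq> {\<theta>. 0 \<le> ip \<theta> m''}"
    proof (rule cone_gen_least[OF G(1) _ ccone_half])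
      show "G \<subseteq> {\<theta>. 0 \<le> ip \<theta> m''}"
      proof
        fix g assume g: "g \<in> G"
        show "g \<in> {\<theta>. 0 \<le> ip \<theta> m''}"
        proof (cases "ip g m = 0")
          case True thus ?thesis using A[OF g] A2[OF g] by simp
        next
          case False thus ?thesis using B[OF g] by simp
        qed
      qed
    qed
    thus ?thesis using G(3) by blast
  qed
  have seteq: "{g\<in>G. ip g m'' = 0} = {g\<in>G0. ip g m' = 0}"
    unfolding G0_def using A B by force
  have "\<sigma> \<inter> {\<theta>. ip \<theta> m'' = 0} = \<rho>"
    using face_char[OF G(1), of m''] nn G(3) seteq rho by simp
  thus ?thesis unfolding is_face_def using nn by blast
qed

lemma double_sum_id:
  fixes c x y z w :: "'g \<Rightarrow> real"
  shows "(\<Sum>g\<in>A. \<Sum>h\<in>B. (c g * c h / P) * (x g * y h - z h * w g)) =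
    ((\<Sum>g\<in>A. c g * x g) * (\<Sum>h\<in>B. c h * y h) - (\<Sum>g\<in>A. c g * w g) * (\<Sum>h\<in>B. c h * z h)) / P"
proof -
  have "(\<Sum>g\<in>A. \<Sum>h\<in>B. (c g * c h / P) * (x g * y h - z h * w g)) =
     (\<Sum>g\<in>A. \<Sum>h\<in>B. ((c g * x g) * (c h * y h) - (c g * w g) * (c h * z h)) / P)"
    by (intro sum.cong refl) (simp add: field_simps)
  also have "\<dots> = ((\<Sum>g\<in>A. \<Sum>h\<in>B. (c g * x g) * (c h * y h)) - (\<Sum>g\<in>A. \<Sum>h\<in>B. (c g * w g) * (c h * z h))) / P"
    by (simp add: sum_divide_distrib[symmetric] sum_subtractf)
  also have "\<dots> = ((\<Sum>g\<in>A. c g * x g) * (\<Sum>h\<in>B. c h * y h) - (\<Sum>g\<in>A. c g * w g) * (\<Sum>h\<in>B. c h * z h)) / P"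
    by (simp add: sum_product)
  finally show ?thesis .
qed

lemma split3:
  fixes f :: "'g \<Rightarrow> real"
  assumes "finite G"
  shows "(\<Sum>g\<in>G. f g) = (\<Sum>g\<in>{g\<in>G. p g = (0::real)}. f g) + (\<Sum>g\<in>{g\<in>G. 0 < p g}. f g) + (\<Sum>g\<in>{g\<in>G. p g < 0}. f g)"
proof -
  have e: "G = {g\<in>G. p g = 0} \<union> ({g\<in>G. 0 < p g} \<union> {g\<in>G. p g < 0})" by auto
  have "(\<Sum>g\<in>G. f g) = (\<Sum>g\<in>{g\<in>G. p g = 0} \<union> ({g\<in>G. 0 < p g} \<union> {g\<in>G. p g < 0}). f g)"
    using e by simp
  also have "\<dots> = (\<Sum>g\<in>{g\<in>G. p g = 0}. f g) + (\<Sum>g\<in>{g\<in>G. 0 < p g} \<union> {g\<in>G. p g < 0}. f g)"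
    by (rule sum.union_disjoint) (use assms in auto)
  also have "(\<Sum>g\<in>{g\<in>G. 0 < p g} \<union> {g\<in>G. p g < 0}. f g) = (\<Sum>g\<in>{g\<in>G. 0 < p g}. f g) + (\<Sum>g\<in>{g\<in>G. p g < 0}. f g)"
    by (rule sum.union_disjoint) (use assms in auto)
  finally show ?thesis by simp
qed

lemma pair_diff: "pair (\<lambda>i. x i - y i) n = pair x n - pair y n"
  unfolding pair_def by (simp add: algebra_simps sum_subtractf)

lemma cg_scale: "x \<in> cone_gen G \<Longrightarrow> 0 \<le> a \<Longrightarrow> (\<lambda>i. a * x i) \<in> cone_gen G"
  using ccone_cone_gen unfolding ccone_def by blast
lemma cg_add: "x \<in> cone_gen G \<Longrightarrow> y \<in> cone_gen G \<Longrightarrow> (\<lambda>i. x i + y i) \<in> cone_gen G"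
  using ccone_cone_gen unfolding ccone_def by blast

lemma FM_step:
  assumes r: "rat_cone C"
  shows "rat_cone (C \<inter> {\<theta>. 0 \<le> ip \<theta> n})"
proof -
  obtain G where G: "finite G" "\<forall>g\<in>G. \<forall>i. g i \<in> \<int>" "C = cone_gen G"
    using r by (rule rat_coneE)
  define gn where "gn g = ip g n" for g
  define G0 where "G0 = {g\<in>G. gn g = 0}"
  define Gp where "Gp = {g\<in>G. 0 < gn g}"
  define Gm where "Gm = {g\<in>G. gn g < 0}"
  define comb where "comb g h = (\<lambda>i. gn g * h i - gn h * g i)" for g h :: "'a \<Rightarrow> real"
  define G' where "G' = G0 \<union> Gp \<union> (\<lambda>(g,h). comb g h) ` (Gp \<times> Gm)"
  have fin: "finite G0" "finite Gp" "finite Gm" using G(1) unfolding G0_def Gp_def Gm_def by auto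
  have fG': "finite G'" unfolding G'_def using fin by auto
  have gnI: "\<And>g. g \<in> G \<Longrightarrow> gn g \<in> \<int>" unfolding gn_def using ip_Ints G(2) by blast
  have intG': "\<forall>g\<in>G'. \<forall>i. g i \<in> \<int>"
    unfolding G'_def G0_def Gp_def Gm_def comb_def using G(2) gnI by auto
  have ginC: "\<And>g. g \<in> G \<Longrightarrow> g \<in> cone_gen G" using G(1) gen_in_cone_gen by blast
  have combC: "\<And>g h. g \<in> Gp \<Longrightarrow> h \<in> Gm \<Longrightarrow> comb g h \<in> cone_gen G \<inter> {\<theta>. 0 \<le> ip \<theta> n}"
  proof -
    fix g h assume g: "g \<in> Gp" and h: "h \<in> Gm"
    have "(\<lambda>i. (\<lambda>i. gn g * h i) i + (\<lambda>i. (- gn h) * g i) i) \<in> cone_gen G"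
      by (rule cg_add; rule cg_scale) (use g h ginC in \<open>auto simp: Gp_def Gm_def\<close>)
    moreover have "ip (comb g h) n = 0" unfolding comb_def
      by (simp add: pair_diff pair_scale gn_def)
    ultimately show "comb g h \<in> cone_gen G \<inter> {\<theta>. 0 \<le> ip \<theta> n}" unfolding comb_def by simp
  qed
  have sup: "cone_gen G' \<subseteq> C \<inter> {\<theta>. 0 \<le> ip \<theta> n}"
    unfolding G(3)
  proof (rule cone_gen_least[OF fG'])
    show "ccone (cone_gen G \<inter> {\<theta>. 0 \<le> ip \<theta> n})" by (intro ccone_Int ccone_cone_gen ccone_half)
    show "G' \<subseteq> cone_gen G \<inter> {\<theta>. 0 \<le> ip \<theta> n}"
      unfolding G'_def using combC ginC by (auto simp: G0_def Gp_def Gm_def gn_def)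
  qed
  have G'gen: "\<And>g. g \<in> G' \<Longrightarrow> g \<in> cone_gen G'" using fG' gen_in_cone_gen by blast
  have sub: "C \<inter> {\<theta>. 0 \<le> ip \<theta> n} \<subseteq> cone_gen G'"
  proof
    fix \<theta> assume th: "\<theta> \<in> C \<inter> {\<theta>. 0 \<le> ip \<theta> n}"
    then obtain c where c: "\<theta> = (\<lambda>i. \<Sum>g\<in>G. c g * g i)" "\<forall>g\<in>G. 0 \<le> c g"
      unfolding G(3) cone_gen_def by blast
    define A0 where "A0 = (\<lambda>i. \<Sum>g\<in>G0. c g * g i)"
    define Ap where "Ap = (\<lambda>i. \<Sum>g\<in>Gp. c g * g i)"
    define Am where "Am = (\<lambda>i. \<Sum>g\<in>Gm. c g * g i)"
    have thsplit: "\<And>i. \<theta> i = A0 i + Ap i + Am i"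
      unfolding c(1) A0_def Ap_def Am_def G0_def Gp_def Gm_def by (rule split3[OF G(1)])
    define Pp where "Pp = (\<Sum>g\<in>Gp. c g * gn g)"
    define Nm where "Nm = (\<Sum>h\<in>Gm. c h * (- gn h))"
    have ipth: "ip \<theta> n = (\<Sum>g\<in>G. c g * gn g)" unfolding gn_def by (rule ip_cone_gen[OF c(1)])
    also have "\<dots> = (\<Sum>g\<in>G0. c g * gn g) + Pp + (\<Sum>g\<in>Gm. c g * gn g)"
      unfolding Pp_def G0_def Gp_def Gm_def by (rule split3[OF G(1)])
    also have "(\<Sum>g\<in>G0. c g * gn g) = 0" unfolding G0_def by simp
    also have "(\<Sum>g\<in>Gm. c g * gn g) = - Nm" unfolding Nm_def by (simp add: sum_negf)
    finally have ipeq: "ip \<theta> n = Pp - Nm" by simp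
    have Pp0: "0 \<le> Pp" unfolding Pp_def using c(2) by (auto intro!: sum_nonneg simp: Gp_def)
    have Nm0: "0 \<le> Nm" unfolding Nm_def using c(2) by (auto intro!: sum_nonneg simp: Gm_def mult_nonneg_nonpos)
    have PN: "Nm \<le> Pp" using ipeq th by simp
    have A0C: "A0 \<in> cone_gen G'" unfolding A0_def
      by (rule ccone_sum[OF ccone_cone_gen fin(1)])
         (use c(2) G'gen in \<open>auto intro!: cg_scale simp: G'_def G0_def\<close>)
    have ApC: "\<And>a. 0 \<le> a \<Longrightarrow> (\<lambda>i. a * Ap i) \<in> cone_gen G'"
    proof -
      fix a :: real assume a: "0 \<le> a"
      have "Ap \<in> cone_gen G'" unfolding Ap_def
        by (rule ccone_sum[OF ccone_cone_gen fin(2)])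
           (use c(2) G'gen in \<open>auto intro!: cg_scale simp: G'_def Gp_def\<close>)
      thus "(\<lambda>i. a * Ap i) \<in> cone_gen G'" using a cg_scale by blast
    qed
    show "\<theta> \<in> cone_gen G'"
    proof (cases "Nm = 0")
      case True
      have "\<forall>h\<in>Gm. c h * (- gn h) = 0"
        using True sum_nonneg_eq_0_iff[OF fin(3), of "\<lambda>h. c h * (- gn h)"] c(2)
        unfolding Nm_def by (auto simp: Gm_def mult_nonneg_nonpos)
      hence ch0: "\<forall>h\<in>Gm. c h = 0" by (auto simp: Gm_def)
      have "\<And>i. Am i = 0" unfolding Am_def using ch0 by simp
      hence "\<theta> = (\<lambda>i. A0 i + (\<lambda>i. 1 * Ap i) i)" using thsplit by auto
      thus ?thesis using cg_add[OF A0C ApC[of 1]] by simp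
    next
      case False
      hence Nmp: "0 < Nm" using Nm0 by simp
      hence Ppp: "0 < Pp" using PN by simp
      define D where "D = (\<lambda>i. \<Sum>g\<in>Gp. \<Sum>h\<in>Gm. (c g * c h / Pp) * comb g h i)"
      have DC: "D \<in> cone_gen G'" unfolding D_def
      proof (rule ccone_sum[OF ccone_cone_gen fin(2)], intro ballI)
        fix g assume g: "g \<in> Gp"
        show "(\<lambda>i. \<Sum>h\<in>Gm. (c g * c h / Pp) * comb g h i) \<in> cone_gen G'"
        proof (rule ccone_sum[OF ccone_cone_gen fin(3)], intro ballI)
          fix h assume h: "h \<in> Gm"
          have "comb g h \<in> G'" unfolding G'_def using g h by auto
          moreover have "0 \<le> c g * c h / Pp" using c(2) g h Ppp by (auto simp: Gp_def Gm_def)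
          ultimately show "(\<lambda>i. (c g * c h / Pp) * comb g h i) \<in> cone_gen G'"
            using cg_scale G'gen by blast
        qed
      qed
      have Deq: "\<And>i. D i = Am i + (Nm / Pp) * Ap i"
      proof -
        fix i
        have "D i = ((\<Sum>g\<in>Gp. c g * gn g) * (\<Sum>h\<in>Gm. c h * h i) - (\<Sum>g\<in>Gp. c g * g i) * (\<Sum>h\<in>Gm. c h * gn h)) / Pp"
          unfolding D_def comb_def by (simp only: double_sum_id)
        also have "(\<Sum>h\<in>Gm. c h * gn h) = - Nm" unfolding Nm_def by (simp add: sum_negf)
        finally show "D i = Am i + (Nm / Pp) * Ap i"
          using Ppp unfolding Pp_def[symmetric] Am_def Ap_def by (simp add: field_simps)
      qed
      have "\<theta> = (\<lambda>i. (\<lambda>i. A0 i + (\<lambda>i. (1 - Nm / Pp) * Ap i) i) i + D i)"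
      proof
        fix i show "\<theta> i = (\<lambda>i. A0 i + (\<lambda>i. (1 - Nm / Pp) * Ap i) i) i + D i"
          using thsplit[of i] Deq[of i] by (simp add: algebra_simps)
      qed
      moreover have "0 \<le> 1 - Nm / Pp" using PN Ppp by simp
      ultimately show ?thesis using cg_add[OF cg_add[OF A0C ApC] DC] by simp
    qed
  qed
  have "C \<inter> {\<theta>. 0 \<le> ip \<theta> n} = cone_gen G'" using sub sup by blast
  thus ?thesis by (rule rat_coneI[OF fG' intG'])
qed

lemma rat_cone_UNIV: "rat_cone (UNIV :: ('v::finite \<Rightarrow> real) set)"
proof -
  define e where "e i = (\<lambda>j. if j = i then 1 else 0 :: real)" for i :: 'v
  define G where "G = range e \<union> range (\<lambda>i j. - e i j)"
  have fG: "finite G" unfolding G_def by simp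
  have iG: "\<forall>g\<in>G. \<forall>i. g i \<in> \<int>" unfolding G_def e_def by auto
  have "UNIV \<subseteq> cone_gen G"
  proof
    fix \<theta> :: "'v \<Rightarrow> real"
    have t: "\<theta> = (\<lambda>j. \<Sum>i\<in>UNIV. (\<lambda>j. \<theta> i * e i j) j)"
    proof
      fix j
      have "(\<Sum>i\<in>UNIV. \<theta> i * e i j) = (\<Sum>i\<in>UNIV. if i = j then \<theta> j else 0)"
        by (rule sum.cong) (auto simp: e_def)
      thus "\<theta> j = (\<Sum>i\<in>UNIV. (\<lambda>j. \<theta> i * e i j) j)" by simp
    qed
    have "\<forall>i\<in>UNIV. (\<lambda>j. \<theta> i * e i j) \<in> cone_gen G"
    proof
      fix i :: 'v
      show "(\<lambda>j. \<theta> i * e i j) \<in> cone_gen G"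
      proof (cases "0 \<le> \<theta> i")
        case True
        have "e i \<in> cone_gen G" using gen_in_cone_gen[OF fG] unfolding G_def by blast
        thus ?thesis using cg_scale True by blast
      next
        case False
        have "(\<lambda>j. - e i j) \<in> cone_gen G" using gen_in_cone_gen[OF fG] unfolding G_def by blast
        hence "(\<lambda>j. (- \<theta> i) * (\<lambda>j. - e i j) j) \<in> cone_gen G"
          by (rule cg_scale) (use False in simp)
        thus ?thesis by simp
      qed
    qed
    from ccone_sum[OF ccone_cone_gen _ this] t show "\<theta> \<in> cone_gen G" by simp
  qed
  hence "UNIV = cone_gen G" by blast
  thus ?thesis by (rule rat_coneI[OF fG iG])
qed

definition Hc :: "('v \<Rightarrow> int) set \<Rightarrow> ('v::finite \<Rightarrow> real) set" where
  "Hc P = {\<theta>. \<forall>p\<in>P. 0 \<le> ip \<theta> p}"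

lemma rat_cone_Hc: "finite P \<Longrightarrow> rat_cone (Hc P)"
proof (induction P rule: finite_induct)
  case empty
  then show ?case using rat_cone_UNIV by (simp add: Hc_def)
next
  case (insert x F)
  have "Hc (insert x F) = Hc F \<inter> {\<theta>. 0 \<le> ip \<theta> x}" unfolding Hc_def by auto
  then show ?case using FM_step insert by simp
qed

lemma closed_Hc: "closed (Hc P)"
proof -
  have "Hc P = (\<Inter>p\<in>P. {\<theta>. 0 \<le> ip \<theta> p})" unfolding Hc_def by auto
  moreover have "\<And>p. closed {\<theta>::'a\<Rightarrow>real. 0 \<le> ip \<theta> p}"
    unfolding pair_def by (intro closed_Collect_le continuous_intros) auto
  ultimately show ?thesis by auto
qed

lemma pair_neg2: "pair x (\<lambda>i. - n i) = - pair x n"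
  unfolding pair_def by (simp add: sum_negf)

definition Box :: "nat \<Rightarrow> ('v::finite \<Rightarrow> int) set" where
  "Box k = {n. \<forall>i. 0 \<le> n i \<and> n i \<le> int k}"

lemma finite_Box: "finite (Box k :: ('v::finite \<Rightarrow> int) set)"
proof -
  have "Box k \<subseteq> (Pi\<^sub>E UNIV (\<lambda>_::'v. {0..int k}))"
    unfolding Box_def PiE_UNIV_domain by auto
  moreover have "finite (Pi\<^sub>E UNIV (\<lambda>_::'v. {0..int k}))" by (rule finite_PiE) auto
  ultimately show ?thesis by (rule finite_subset)
qed

definition sg :: "('v::finite \<Rightarrow> real) \<Rightarrow> ('v \<Rightarrow> int) \<Rightarrow> int" where
  "sg \<theta> n = (if 0 < ip \<theta> n then 1 else if ip \<theta> n < 0 then -1 else 0)"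

definition cell :: "nat \<Rightarrow> (('v::finite \<Rightarrow> int) \<Rightarrow> int) \<Rightarrow> ('v \<Rightarrow> real) set" where
  "cell k s = {\<theta>. \<forall>n\<in>Box k. 0 \<le> real_of_int (s n) * ip \<theta> n \<and> (s n = 0 \<longrightarrow> ip \<theta> n = 0)}"

lemma sg_vals: "sg \<theta> n \<in> {-1, 0, 1}" unfolding sg_def by auto

lemma in_cell_sg: "\<theta> \<in> cell k (sg \<theta>)"
  unfolding cell_def sg_def by auto

lemma cell_Hc:
  fixes s :: "('v::finite \<Rightarrow> int) \<Rightarrow> int"
  shows "cell k s = Hc (((\<lambda>n i. s n * n i) ` Box k) \<union> {n\<in>Box k. s n = 0} \<union> ((\<lambda>n i. - n i) ` {n\<in>Box k. s n = 0}))"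
proof (rule Set.set_eqI)
  fix \<theta> :: "'v \<Rightarrow> real"
  have e1: "\<And>n::'v\<Rightarrow>int. ip \<theta> (\<lambda>i. s n * n i) = real_of_int (s n) * ip \<theta> n"
    by (simp add: pair_scale2)
  have e2: "\<And>n::'v\<Rightarrow>int. ip \<theta> (\<lambda>i. - n i) = - ip \<theta> n"
    by (simp add: pair_neg2)
  show "\<theta> \<in> cell k s \<longleftrightarrow> \<theta> \<in> Hc (((\<lambda>n i. s n * n i) ` Box k) \<union> {n\<in>Box k. s n = 0} \<union> ((\<lambda>n i. - n i) ` {n\<in>Box k. s n = 0}))"
  proof
    assume "\<theta> \<in> cell k s"
    hence a: "\<forall>n\<in>Box k. 0 \<le> real_of_int (s n) * ip \<theta> n \<and> (s n = 0 \<longrightarrow> ip \<theta> n = 0)"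
      unfolding cell_def by blast
    show "\<theta> \<in> Hc (((\<lambda>n i. s n * n i) ` Box k) \<union> {n\<in>Box k. s n = 0} \<union> ((\<lambda>n i. - n i) ` {n\<in>Box k. s n = 0}))"
      unfolding Hc_def using a e1 e2 by auto
  next
    assume "\<theta> \<in> Hc (((\<lambda>n i. s n * n i) ` Box k) \<union> {n\<in>Box k. s n = 0} \<union> ((\<lambda>n i. - n i) ` {n\<in>Box k. s n = 0}))"
    hence a: "\<forall>p\<in>(((\<lambda>n i. s n * n i) ` Box k) \<union> {n\<in>Box k. s n = 0} \<union> ((\<lambda>n i. - n i) ` {n\<in>Box k. s n = 0})). 0 \<le> ip \<theta> p"
      unfolding Hc_def mem_Collect_eq by assumption
    have "\<forall>n\<in>Box k. 0 \<le> real_of_int (s n) * ip \<theta> n \<and> (s n = 0 \<longrightarrow> ip \<theta> n = 0)"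
    proof
      fix n :: "'v \<Rightarrow> int" assume n: "n \<in> Box k"
      let ?S = "(\<lambda>n i. s n * n i) ` Box k \<union> {n\<in>Box k. s n = 0} \<union> (\<lambda>n i. - n i) ` {n\<in>Box k. s n = 0}"
      have m1: "(\<lambda>i. s n * n i) \<in> ?S" by (intro UnI1 image_eqI[OF refl] n)
      have "0 \<le> ip \<theta> (\<lambda>i. s n * n i)" using bspec[OF a m1] by simp
      hence c1: "0 \<le> real_of_int (s n) * ip \<theta> n" using e1 by simp
      have c2: "ip \<theta> n = 0" if s0: "s n = 0"
      proof -
        have m2: "n \<in> ?S" using n s0 by blast
        have m3: "(\<lambda>i. - n i) \<in> ?S" by (intro UnI2 image_eqI[OF refl]) (use n s0 in blast)
        have "0 \<le> ip \<theta> n" using bspec[OF a m2] by simp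
        moreover have "0 \<le> ip \<theta> (\<lambda>i. - n i)" using bspec[OF a m3] by simp
        ultimately show "ip \<theta> n = 0" using e2 by simp
      qed
      show "0 \<le> real_of_int (s n) * ip \<theta> n \<and> (s n = 0 \<longrightarrow> ip \<theta> n = 0)" using c1 c2 by blast
    qed
    thus "\<theta> \<in> cell k s" unfolding cell_def by blast
  qed
qed

lemma rat_cell: "rat_cone (cell k s)"
  unfolding cell_Hc by (rule rat_cone_Hc) (simp add: finite_Box)

lemma closed_cell: "closed (cell k s)"
  unfolding cell_Hc by (rule closed_Hc)

lemma cell_Int_face:
  fixes s t :: "('v::finite \<Rightarrow> int) \<Rightarrow> int"
  assumes s: "\<forall>n. s n \<in> {-1,0,1}" and t: "\<forall>n. t n \<in> {-1,0,1}"
  shows "is_face (cell k s \<inter> cell k t) (cell k s)"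
proof -
  define D where "D = {n\<in>Box k. s n \<noteq> t n}"
  have fD: "finite D" unfolding D_def by (rule finite_subset[OF _ finite_Box]) blast
  define m where "m = (\<lambda>i. \<Sum>n\<in>D. s n * n i)"
  have ipm: "\<And>\<theta>::'v\<Rightarrow>real. ip \<theta> m = (\<Sum>n\<in>D. real_of_int (s n) * ip \<theta> n)"
    unfolding m_def by (simp add: pair_sum2 pair_scale2)
  have terms: "\<And>(\<theta>::'v\<Rightarrow>real) n. \<theta> \<in> cell k s \<Longrightarrow> n \<in> D \<Longrightarrow> 0 \<le> real_of_int (s n) * ip \<theta> n"
    unfolding cell_def D_def by blast
  have nn: "\<forall>\<theta>\<in>cell k s. 0 \<le> ip \<theta> m"
    using terms ipm by (simp add: sum_nonneg)
  have eq: "cell k s \<inter> cell k t = cell k s \<inter> {\<theta>. ip \<theta> m = 0}"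
  proof
    show "cell k s \<inter> cell k t \<subseteq> cell k s \<inter> {\<theta>. ip \<theta> m = 0}"
    proof
      fix \<theta> :: "'v \<Rightarrow> real" assume th: "\<theta> \<in> cell k s \<inter> cell k t"
      have "\<forall>n\<in>D. ip \<theta> n = 0"
      proof
        fix n :: "'v \<Rightarrow> int" assume n: "n \<in> D"
        hence nB: "n \<in> Box k" and d: "s n \<noteq> t n" unfolding D_def by auto
        have a: "0 \<le> real_of_int (s n) * ip \<theta> n" "s n = 0 \<longrightarrow> ip \<theta> n = 0"
          using th nB unfolding cell_def by auto
        have b: "0 \<le> real_of_int (t n) * ip \<theta> n" "t n = 0 \<longrightarrow> ip \<theta> n = 0"
          using th nB unfolding cell_def by auto
        show "ip \<theta> n = 0"
          using s[rule_format, of n] t[rule_format, of n] a b d by auto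
      qed
      hence "ip \<theta> m = 0" using ipm by simp
      thus "\<theta> \<in> cell k s \<inter> {\<theta>. ip \<theta> m = 0}" using th by blast
    qed
  next
    show "cell k s \<inter> {\<theta>. ip \<theta> m = 0} \<subseteq> cell k s \<inter> cell k t"
    proof
      fix \<theta> :: "'v \<Rightarrow> real" assume th: "\<theta> \<in> cell k s \<inter> {\<theta>. ip \<theta> m = 0}"
      hence ths: "\<theta> \<in> cell k s" by blast
      have sum0: "(\<Sum>n\<in>D. real_of_int (s n) * ip \<theta> n) = 0" using th ipm by simp
      have tnn: "\<forall>n\<in>D. 0 \<le> real_of_int (s n) * ip \<theta> n" using terms[OF ths] by blast
      have z: "\<forall>n\<in>D. real_of_int (s n) * ip \<theta> n = 0"
        using sum_nonneg_eq_0_iff[OF fD, of "\<lambda>n. real_of_int (s n) * ip \<theta> n"] tnn sum0 by simp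
      have zD: "\<And>n::'v\<Rightarrow>int. n \<in> D \<Longrightarrow> ip \<theta> n = 0"
      proof -
        fix n :: "'v \<Rightarrow> int" assume n: "n \<in> D"
        show "ip \<theta> n = 0"
        proof (cases "s n = 0")
          case True thus ?thesis using ths n unfolding cell_def D_def by auto
        next
          case False
          have "real_of_int (s n) * ip \<theta> n = 0" using z n by blast
          thus ?thesis using False by simp
        qed
      qed
      have "\<theta> \<in> cell k t" unfolding cell_def
      proof (intro CollectI ballI)
        fix n :: "'v \<Rightarrow> int" assume nB: "n \<in> Box k"
        show "0 \<le> real_of_int (t n) * ip \<theta> n \<and> (t n = 0 \<longrightarrow> ip \<theta> n = 0)"
        proof (cases "s n = t n")
          case True thus ?thesis using ths nB unfolding cell_def by auto
        next
          case False hence "n \<in> D" using nB unfolding D_def by auto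
          thus ?thesis using zD by simp
        qed
      qed
      thus "\<theta> \<in> cell k s \<inter> cell k t" using ths by blast
    qed
  qed
  show ?thesis unfolding is_face_def using nn eq by blast
qed

lemma inter_face:
  fixes s t :: "('v::finite \<Rightarrow> int) \<Rightarrow> int"
  assumes s: "\<forall>n. s n \<in> {-1,0,1}" and t: "\<forall>n. t n \<in> {-1,0,1}"
    and f1: "is_face \<tau>1 (cell k s)" and f2: "is_face \<tau>2 (cell k t)"
  shows "is_face (\<tau>1 \<inter> \<tau>2) \<tau>1"
proof -
  define F where "F = cell k s \<inter> cell k t"
  have fF: "is_face F (cell k s)" unfolding F_def by (rule cell_Int_face[OF s t])
  obtain m2 where m2: "\<forall>\<theta>\<in>cell k t. 0 \<le> ip \<theta> m2" "\<tau>2 = cell k t \<inter> {\<theta>. ip \<theta> m2 = 0}"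
    using f2 unfolding is_face_def by blast
  have "is_face (F \<inter> {\<theta>. ip \<theta> m2 = 0}) F"
    unfolding is_face_def using m2(1) unfolding F_def by blast
  hence g: "is_face (F \<inter> {\<theta>. ip \<theta> m2 = 0}) (cell k s)"
    by (rule face_trans[OF rat_cell fF])
  have sub1: "\<tau>1 \<subseteq> cell k s" by (rule face_sub[OF f1])
  have e: "\<tau>1 \<inter> \<tau>2 = \<tau>1 \<inter> (F \<inter> {\<theta>. ip \<theta> m2 = 0})"
    using sub1 m2(2) unfolding F_def by blast
  have "is_face (\<tau>1 \<inter> \<tau>2) (cell k s)" unfolding e by (rule face_Int[OF f1 g])
  thus ?thesis by (rule face_mono) (use sub1 in blast)+
qed

lemma inj_mat_dim:
  fixes F :: "complex mat"
  assumes F: "F \<in> carrier_mat n m"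
    and inj: "\<forall>v\<in>carrier_vec m. F *\<^sub>v v = 0\<^sub>v n \<longrightarrow> v = 0\<^sub>v m"
  shows "m \<le> n"
proof (rule ccontr)
  assume "\<not> m \<le> n"
  hence nm: "n < m" by simp
  define B :: "complex mat" where "B = mat m m (\<lambda>(r,c). if r < n then F $$ (r,c) else 0)"
  have Bc: "B \<in> carrier_mat m m" unfolding B_def by simp
  have "det B = (\<Sum>j<m. B $$ (n,j) * cofactor B n j)"
    by (rule laplace_expansion_row[OF Bc nm])
  also have "\<dots> = 0" unfolding B_def using nm by simp
  finally have "det B = 0" .
  then obtain v where v: "v \<in> carrier_vec m" "v \<noteq> 0\<^sub>v m" "B *\<^sub>v v = 0\<^sub>v m"
    using det_0_iff_vec_prod_zero[OF Bc] by blast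
  have "F *\<^sub>v v = 0\<^sub>v n"
  proof (rule eq_vecI)
    fix r assume r: "r < dim_vec (0\<^sub>v n :: complex vec)"
    hence rn: "r < n" by simp
    have rowe: "row B r = row F r"
      using F rn nm unfolding B_def by (auto intro!: eq_vecI)
    have "(B *\<^sub>v v) $ r = 0" using v(3) rn nm by simp
    hence "row B r \<bullet> v = 0" using rn nm Bc by simp
    thus "(F *\<^sub>v v) $ r = (0\<^sub>v n :: complex vec) $ r" using rowe rn F by simp
  next
    show "dim_vec (F *\<^sub>v v) = dim_vec (0\<^sub>v n :: complex vec)" using F by simp
  qed
  with inj v show False by blast
qed

lemma dv_le_total: "dv E i \<le> total_dim (E::('v::finite,'a) qrep)"
  unfolding total_dim_def by (rule member_le_sum) auto

lemma subobj_le: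
  assumes "subobj Arr src tgt I A E"
  shows "dv A i \<le> dv E i"
proof -
  obtain f where f: "is_mor Arr src tgt A E f" "injective_mor A E f"
    using assms unfolding subobj_def by blast
  have c: "f i \<in> carrier_mat (dv E i) (dv A i)" using f(1) unfolding is_mor_def by blast
  have inj: "\<forall>v\<in>carrier_vec (dv A i). f i *\<^sub>v v = 0\<^sub>v (dv E i) \<longrightarrow> v = 0\<^sub>v (dv A i)"
    using f(2) unfolding injective_mor_def by blast
  show ?thesis by (rule inj_mat_dim[OF c inj])
qed

lemma ip_nat: "ip \<theta> (\<lambda>i. int (d i)) = pair \<theta> (\<lambda>i. real (d i))"
  by simp

lemma wall_cell:
  fixes \<theta> \<theta>' :: "'v::finite \<Rightarrow> real" and Arr :: "'a set"
  assumes w: "\<theta> \<in> wall_set Arr src tgt I k" and c: "\<theta>' \<in> cell k (sg \<theta>)"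
  shows "\<theta>' \<in> wall_set Arr src tgt I k"
proof -
  obtain E :: "('v,'a) qrep" where E: "objA Arr src tgt I E" "total_dim E \<noteq> 0" "total_dim E \<le> k"
    "semistable Arr src tgt I \<theta> E"
    using w unfolding wall_set_def by blast
  have cc: "\<And>n. n \<in> Box k \<Longrightarrow> 0 \<le> real_of_int (sg \<theta> n) * ip \<theta>' n \<and> (sg \<theta> n = 0 \<longrightarrow> ip \<theta>' n = 0)"
    using c unfolding cell_def by blast
  define dE where "dE = (\<lambda>i. int (dv E i))"
  have leE: "dv E i \<le> k" for i using dv_le_total[of E i] E(3) by linarith
  have dEB: "dE \<in> Box k" unfolding dE_def Box_def using leE by simp
  have p0: "ip \<theta> dE = 0" using E(4) unfolding semistable_def dE_def by simp
  hence "sg \<theta> dE = 0" unfolding sg_def by simp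
  hence "ip \<theta>' dE = 0" using cc[OF dEB] by blast
  hence q0: "pair \<theta>' (\<lambda>i. real (dv E i)) = 0" unfolding dE_def by simp
  have qA: "pair \<theta>' (\<lambda>i. real (dv A i)) \<le> 0" if A: "subobj Arr src tgt I A E" for A
  proof -
    define dA where "dA = (\<lambda>i. int (dv A i))"
    have le: "dv A i \<le> k" for i
    proof -
      have "dv A i \<le> dv E i" by (rule subobj_le[OF A])
      also have "\<dots> \<le> total_dim E" by (rule dv_le_total)
      also have "\<dots> \<le> k" by (rule E(3))
      finally show ?thesis .
    qed
    have dAB: "dA \<in> Box k" unfolding dA_def Box_def using le by simp
    have "ip \<theta> dA \<le> 0" using E(4) A unfolding semistable_def dA_def by simp
    hence "ip \<theta>' dA \<le> 0"
    proof (cases "ip \<theta> dA = 0")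
      case True
      hence "sg \<theta> dA = 0" unfolding sg_def by simp
      thus ?thesis using cc[OF dAB] by simp
    next
      case False
      hence "ip \<theta> dA < 0" using \<open>ip \<theta> dA \<le> 0\<close> by simp
      hence "sg \<theta> dA = -1" unfolding sg_def by simp
      thus ?thesis using cc[OF dAB] by simp
    qed
    thus ?thesis unfolding dA_def by simp
  qed
  have ss: "semistable Arr src tgt I \<theta>' E" unfolding semistable_def
    by (intro conjI allI impI q0 qA)
  have "objA Arr src tgt I E \<and> total_dim E \<noteq> 0 \<and> total_dim E \<le> k \<and> semistable Arr src tgt I \<theta>' E"
    using E(1-3) ss by simp
  thus ?thesis unfolding wall_set_def by (intro CollectI exI[of _ E])
qed

theorem mainTheorem5:
  fixes Arr :: "'a set" and src tgt :: "'a \<Rightarrow> 'v::finite"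
    and I :: "('v \<times> 'a list \<Rightarrow> complex) set" and k :: nat
  assumes "finite Arr"
    and "admissible_ideal Arr src tgt I"
    and "1 \<le> k"
  shows "(\<exists>S. cone_complex S \<and> \<Union>S = wall_set Arr src tgt I k) \<and>
         closed (wall_set Arr src tgt I k)"
proof -
  define W where "W = wall_set Arr src tgt I k"
  define S0 where "S0 = (\<lambda>\<theta>. cell k (sg \<theta>)) ` W"
  define S where "S = {\<tau>. \<exists>\<sigma>\<in>S0. is_face \<tau> \<sigma>}"
  have WS0: "W = \<Union>S0"
  proof
    show "W \<subseteq> \<Union>S0"
    proof
      fix \<theta> assume th: "\<theta> \<in> W"
      have "cell k (sg \<theta>) \<in> S0" unfolding S0_def using th by (rule imageI)
      moreover have "\<theta> \<in> cell k (sg \<theta>)" by (rule in_cell_sg)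
      ultimately show "\<theta> \<in> \<Union>S0" by (rule UnionI)
    qed
    show "\<Union>S0 \<subseteq> W"
    proof
      fix x assume "x \<in> \<Union>S0"
      then obtain \<sigma> where s: "\<sigma> \<in> S0" "x \<in> \<sigma>" by (rule UnionE)
      obtain \<theta> where th: "\<theta> \<in> W" "\<sigma> = cell k (sg \<theta>)" using s(1) unfolding S0_def by blast
      show "x \<in> W" unfolding W_def
        by (rule wall_cell) (use th s in \<open>simp_all add: W_def\<close>)
    qed
  qed
  have S0rat: "rat_cone \<sigma>" if sS: "\<sigma> \<in> S0" for \<sigma>
  proof -
    obtain \<theta> where "\<sigma> = cell k (sg \<theta>)" using sS unfolding S0_def by blast
    thus ?thesis using rat_cell by simp
  qed
  have S0closed: "closed \<sigma>" if sS: "\<sigma> \<in> S0" for \<sigma>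
  proof -
    obtain \<theta> where "\<sigma> = cell k (sg \<theta>)" using sS unfolding S0_def by blast
    thus ?thesis using closed_cell by simp
  qed
  have finS0: "finite S0"
  proof -
    have "S0 \<subseteq> cell k ` (Pi\<^sub>E (Box k) (\<lambda>_. {-1,0,1}))"
    proof
      fix \<sigma> assume "\<sigma> \<in> S0"
      then obtain \<theta> where th: "\<sigma> = cell k (sg \<theta>)" unfolding S0_def by blast
      have "cell k (sg \<theta>) = cell k (restrict (sg \<theta>) (Box k))"
        unfolding cell_def by auto
      moreover have "restrict (sg \<theta>) (Box k) \<in> Pi\<^sub>E (Box k) (\<lambda>_. {-1,0,1})"
        using sg_vals[of \<theta>] by auto
      ultimately show "\<sigma> \<in> cell k ` (Pi\<^sub>E (Box k) (\<lambda>_. {-1,0,1}))" using th by blast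
    qed
    moreover have "finite (Pi\<^sub>E (Box k) (\<lambda>_. {-1::int,0,1}))"
      by (rule finite_PiE) (auto simp: finite_Box)
    ultimately show ?thesis using finite_subset by blast
  qed
  have finS: "finite S"
  proof -
    have "S = (\<Union>\<sigma>\<in>S0. {\<tau>. is_face \<tau> \<sigma>})" unfolding S_def by blast
    moreover have "finite (\<Union>\<sigma>\<in>S0. {\<tau>. is_face \<tau> \<sigma>})"
      by (rule finite_UN_I[OF finS0]) (rule finite_faces[OF S0rat])
    ultimately show ?thesis by simp
  qed
  have cc: "cone_complex S"
    unfolding cone_complex_def
  proof (intro conjI ballI allI impI)
    show "finite S" by (rule finS)
  next
    fix \<sigma> assume "\<sigma> \<in> S"
    then obtain \<rho> where "\<rho> \<in> S0" "is_face \<sigma> \<rho>" unfolding S_def by blast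
    thus "rat_cone \<sigma>" using face_rat S0rat by blast
  next
    fix \<sigma> \<tau> assume s: "\<sigma> \<in> S" and f: "is_face \<tau> \<sigma>"
    then obtain \<rho> where r: "\<rho> \<in> S0" "is_face \<sigma> \<rho>" unfolding S_def by blast
    have "is_face \<tau> \<rho>" by (rule face_trans[OF S0rat[OF r(1)] r(2) f])
    thus "\<tau> \<in> S" unfolding S_def using r(1) by blast
  next
    fix \<sigma> \<tau> assume s: "\<sigma> \<in> S" and t: "\<tau> \<in> S"
    obtain \<theta>1 where f1: "is_face \<sigma> (cell k (sg \<theta>1))" using s unfolding S_def S0_def by blast
    obtain \<theta>2 where f2: "is_face \<tau> (cell k (sg \<theta>2))" using t unfolding S_def S0_def by blast
    have v1: "\<forall>n. sg \<theta>1 n \<in> {-1,0,1}" using sg_vals by blast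
    have v2: "\<forall>n. sg \<theta>2 n \<in> {-1,0,1}" using sg_vals by blast
    show "is_face (\<sigma> \<inter> \<tau>) \<sigma>" by (rule inter_face[OF v1 v2 f1 f2])
    have "is_face (\<tau> \<inter> \<sigma>) \<tau>" by (rule inter_face[OF v2 v1 f2 f1])
    thus "is_face (\<sigma> \<inter> \<tau>) \<tau>" by (simp add: Int_commute)
  qed
  have US: "\<Union>S = W"
  proof
    show "\<Union>S \<subseteq> W"
    proof
      fix x assume "x \<in> \<Union>S"
      then obtain \<tau> where t: "\<tau> \<in> S" "x \<in> \<tau>" by (rule UnionE)
      then obtain \<sigma> where s: "\<sigma> \<in> S0" "is_face \<tau> \<sigma>" unfolding S_def by blast
      have "x \<in> \<sigma>" using face_sub[OF s(2)] t(2) by (rule subsetD)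
      thus "x \<in> W" unfolding WS0 using s(1) by (rule UnionI[rotated])
    qed
    show "W \<subseteq> \<Union>S"
    proof
      fix x assume "x \<in> W"
      then obtain \<sigma> where s: "\<sigma> \<in> S0" "x \<in> \<sigma>" unfolding WS0 by (rule UnionE)
      have "\<sigma> \<in> S" unfolding S_def using s(1) face_refl by blast
      thus "x \<in> \<Union>S" using s(2) by (rule UnionI)
    qed
  qed
  have "closed W" unfolding WS0 using finS0 S0closed by (intro closed_Union) auto
  thus ?thesis using cc US unfolding W_def by blast
qed

end
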